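(* Let $a>0$, let $m$ be a positive integer, and let $l=(l_r,l_0,\dots,l_4)$ be a tuple of nonnegative integers with $s_l:=-l_r+\sum_{i=0}^4 l_i$. Let $f_l=r^{-l_r}x_0^{l_0}x_1^{l_1}\cdots x_4^{l_4}$ on $B_a$, and regard $r_o^m f_l$ as a function on $\tilde{B}_a=B_a\cup L$ by setting it identically zero on $L$. Then $r_o^m f_l$ is of class $C^{k-1}$ on $\tilde{B}_a$ but not of class $C^k$, where $k=\min\{m,m+s_l\}$.
   Context: On $\mathbb{R}^5$ with coordinates $x=(x_0,\dots,x_4)$ put $r=\sqrt{x_1^2+x_2^2+x_3^2+x_4^2}$, $L=\{x: r\le|x_0|\}$, $L_o=\{x: r=|x_0|\}$. Define $r_o=0$ on $L$ and $r_o=\frac{r^2-x_0^2}{r}$ on $\mathbb{R}^5\setminus L$. For $a>0$, $B_a=\{x: 0<r_o<1/a\}$ and $\tilde{B}_a=B_a\cup L$ (an open subset of $\mathbb{R}^5$). *)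

theory Defs
  imports "HOL-Analysis.Analysis"
begin

fun Ck :: "nat \<Rightarrow> 'a::euclidean_space set \<Rightarrow> ('a \<Rightarrow> real) \<Rightarrow> bool" where
  "Ck 0 U f = continuous_on U f"
| "Ck (Suc k) U f =
     ((\<forall>x\<in>U. f differentiable (at x)) \<and>
      (\<forall>i\<in>Basis. Ck k U (\<lambda>x. frechet_derivative f (at x) i)))"

text \<open>Coordinates x = (x_0,...,x_4) on R^5 are x$0,...,x$4.\<close>
definition rr :: "real^5 \<Rightarrow> real" where
  "rr x = sqrt ((x$1)\<^sup>2 + (x$2)\<^sup>2 + (x$3)\<^sup>2 + (x$4)\<^sup>2)"

definition Lcone :: "(real^5) set" where
  "Lcone = {x. rr x \<le> \<bar>x$0\<bar>}"

definition Lo :: "(real^5) set" where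
  "Lo = {x. rr x = \<bar>x$0\<bar>}"

definition r_o :: "real^5 \<Rightarrow> real" where
  "r_o x = (if x \<in> Lcone then 0 else ((rr x)\<^sup>2 - (x$0)\<^sup>2) / rr x)"

definition B :: "real \<Rightarrow> (real^5) set" where
  "B a = {x. 0 < r_o x \<and> r_o x < 1 / a}"

definition Btilde :: "real \<Rightarrow> (real^5) set" where
  "Btilde a = B a \<union> Lcone"

definition f_l :: "nat \<Rightarrow> nat^5 \<Rightarrow> real^5 \<Rightarrow> real" where
  "f_l lr l x = inverse (rr x ^ lr) * (\<Prod>i\<in>UNIV. (x$i) ^ (l$i))"

definition s_l :: "nat \<Rightarrow> nat^5 \<Rightarrow> int" where
  "s_l lr l = - int lr + (\<Sum>i\<in>UNIV. int (l$i))"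

definition g_ml :: "nat \<Rightarrow> nat \<Rightarrow> nat^5 \<Rightarrow> real^5 \<Rightarrow> real" where
  "g_ml m lr l x = (if x \<in> Lcone then 0 else (r_o x) ^ m * f_l lr l x)"

end

theory Submission
  imports Defs
begin


lemma exhaust_5: fixes x :: 5 shows "x = 0 \<or> x = 1 \<or> x = 2 \<or> x = 3 \<or> x = 4"
proof (induct x)
  case (of_int z)
  then have "0 \<le> z" "z < 5" by simp_all
  then have "z = 0 \<or> z = 1 \<or> z = 2 \<or> z = 3 \<or> z = 4" by linarith
  then show ?case by (elim disjE) simp_all
qed

lemma UNIV_5: "(UNIV::5 set) = {0,1,2,3,4}"
proof (rule set_eqI)
  fix x :: 5 show "x \<in> UNIV \<longleftrightarrow> x \<in> {0,1,2,3,4}"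
    using exhaust_5[of x] by (simp only: insert_iff UNIV_I empty_iff simp_thms)
qed

definition hasp :: "(real^5 \<Rightarrow> real) \<Rightarrow> (5 \<Rightarrow> real) \<Rightarrow> real^5 \<Rightarrow> bool" where
  "hasp f P x \<longleftrightarrow> (f has_derivative (\<lambda>h. \<Sum>j\<in>UNIV. h$j * P j)) (at x)"

lemma hasp_const: "hasp (\<lambda>y. c) (\<lambda>j. 0) x"
  unfolding hasp_def by simp

lemma sum_delta_5: "(\<Sum>j\<in>(UNIV::5 set). h j * (if j = i then 1 else 0)) = (h i :: real)"
proof -
  have "(\<Sum>j\<in>(UNIV::5 set). h j * (if j = i then 1 else 0)) = (\<Sum>j\<in>UNIV. if j = i then h j else 0)"
    by (rule sum.cong) auto
  also have "\<dots> = h i" by simp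
  finally show ?thesis .
qed

lemma hasp_coord: "hasp (\<lambda>y. y$i) (\<lambda>j. if j = i then 1 else 0) x"
proof -
  have "((\<lambda>y. y$i) has_derivative (\<lambda>h. h$i)) (at x)"
    by (rule bounded_linear_imp_has_derivative) (rule bounded_linear_vec_nth)
  moreover have eq: "(\<lambda>h::real^5. h$i) = (\<lambda>h. \<Sum>j\<in>UNIV. h$j * (if j = i then 1 else 0))"
  proof
    fix h :: "real^5" show "h$i = (\<Sum>j\<in>UNIV. h$j * (if j = i then 1 else 0))"
      using sum_delta_5[of "\<lambda>j. h $ j" i] by simp
  qed
  ultimately show ?thesis unfolding hasp_def by (rule has_derivative_eq_rhs)
qed


lemma sum_5: "sum f (UNIV::5 set) = f 0 + f 1 + f 2 + f 3 + f 4"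
  by (subst UNIV_5) (simp add: add.assoc)

lemma hasp_add: assumes "hasp f P x" "hasp g Q x" shows "hasp (\<lambda>y. f y + g y) (\<lambda>j. P j + Q j) x"
  unfolding hasp_def
  apply (rule has_derivative_eq_rhs[OF has_derivative_add[OF assms[unfolded hasp_def]]])
  apply (rule ext) apply (simp only: distrib_left sum.distrib)
  done

lemma hasp_diff: assumes "hasp f P x" "hasp g Q x" shows "hasp (\<lambda>y. f y - g y) (\<lambda>j. P j - Q j) x"
  unfolding hasp_def
  apply (rule has_derivative_eq_rhs[OF has_derivative_diff[OF assms[unfolded hasp_def]]])
  apply (rule ext) apply (simp only: right_diff_distrib sum_subtractf)
  done

lemma hasp_mult: assumes "hasp f P x" "hasp g Q x" shows "hasp (\<lambda>y. f y * g y) (\<lambda>j. f x * Q j + P j * g x) x"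
  unfolding hasp_def
  apply (rule has_derivative_eq_rhs[OF has_derivative_mult[OF assms[unfolded hasp_def]]])
  apply (rule ext) apply (simp only: distrib_left sum.distrib sum_distrib_left sum_distrib_right mult.assoc mult.left_commute)
  done

lemma hasp_power: assumes "hasp f P x" shows "hasp (\<lambda>y. f y ^ n) (\<lambda>j. of_nat n * f x ^ (n - 1) * P j) x"
  unfolding hasp_def
  apply (rule has_derivative_eq_rhs[OF has_derivative_power[OF assms[unfolded hasp_def]]])
  apply (rule ext) apply (simp only: sum_distrib_left sum_distrib_right)
  apply (rule sum.cong[OF refl]) apply (simp only: mult_ac)
  done

lemma hasp_sqrt: assumes "hasp f P x" "f x > 0" shows "hasp (\<lambda>y. sqrt (f y)) (\<lambda>j. P j / (2 * sqrt (f x))) x"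
  unfolding hasp_def
  apply (rule has_derivative_eq_rhs[OF has_derivative_real_sqrt[OF assms(2) assms(1)[unfolded hasp_def]]])
  apply (rule ext) apply (simp only: sum_distrib_left sum_distrib_right divide_inverse inverse_mult_distrib)
  apply (rule sum.cong[OF refl]) apply (simp only: mult_ac)
  done

lemma hasp_inverse: assumes "hasp f P x" "f x \<noteq> 0" shows "hasp (\<lambda>y. inverse (f y)) (\<lambda>j. - (P j / (f x)^2)) x"
  unfolding hasp_def
  apply (rule has_derivative_eq_rhs[OF Deriv.has_derivative_inverse[OF assms(2) assms(1)[unfolded hasp_def]]])
  apply (rule ext) apply (simp only: sum_distrib_left sum_distrib_right sum_negf power2_eq_square divide_inverse mult.assoc mult.left_commute inverse_mult_distrib mult_minus_right mult_minus_left)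
  done

lemma hasp_frechet: assumes "hasp f P x" shows "frechet_derivative f (at x) (axis i 1) = P i"
proof -
  have "(\<lambda>h. \<Sum>j\<in>UNIV. h$j * P j) = frechet_derivative f (at x)"
    using assms unfolding hasp_def by (rule frechet_derivative_at)
  then have "frechet_derivative f (at x) (axis i 1) = (\<Sum>j\<in>UNIV. (axis i 1::real^5)$j * P j)"
    by metis
  also have "\<dots> = (\<Sum>j\<in>UNIV. P j * (if j = i then 1 else 0))"
    by (rule sum.cong) (auto simp: axis_def)
  also have "\<dots> = P i" by (rule sum_delta_5)
  finally show ?thesis .
qed


lemma hasp_open: "hasp f P x \<Longrightarrow> open S \<Longrightarrow> x \<in> S \<Longrightarrow> (\<And>y. y \<in> S \<Longrightarrow> f y = g y) \<Longrightarrow> hasp g P x"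
  unfolding hasp_def by (rule has_derivative_transform_within_open)

lemma hasp_cong: "hasp f P x \<Longrightarrow> (\<And>j. P j = Q j) \<Longrightarrow> hasp f Q x"
  unfolding hasp_def by simp

lemma hasp_differentiable: "hasp f P x \<Longrightarrow> f differentiable (at x)"
  unfolding hasp_def differentiable_def by blast

lemma hasp_continuous: "hasp f P x \<Longrightarrow> isCont f x"
  unfolding hasp_def by (rule has_derivative_continuous)


lemma rr_nonneg: "rr x \<ge> 0" unfolding rr_def by simp

lemma rr_sq: "(rr x)^2 = (x$1)^2 + (x$2)^2 + (x$3)^2 + (x$4)^2"
  unfolding rr_def by (simp add: add_nonneg_nonneg)

lemma norm_sq5: "(norm x)^2 = (x$0)^2 + (rr x)^2" for x :: "real^5"
proof -
  have "(norm x)^2 = x \<bullet> x" by (simp add: power2_norm_eq_inner)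
  also have "\<dots> = (\<Sum>i\<in>UNIV. x$i * x$i)" by (simp add: inner_vec_def)
  also have "\<dots> = (x$0)^2 + ((x$1)^2 + (x$2)^2 + (x$3)^2 + (x$4)^2)" by (simp add: sum_5 power2_eq_square add.assoc)
  also have "\<dots> = (x$0)^2 + (rr x)^2" by (simp only: rr_sq)
  finally show ?thesis .
qed

lemma comp_le_rr: "i \<noteq> 0 \<Longrightarrow> \<bar>x$i\<bar> \<le> rr x"
proof -
  assume "i \<noteq> 0"
  then have "(x$i)^2 \<le> (rr x)^2" unfolding rr_sq using exhaust_5[of i] by auto
  then show ?thesis using rr_nonneg[of x] by (simp add: power2_le_iff_abs_le)
qed

definition prj :: "real^5 \<Rightarrow> real^5" where "prj x = (\<chi> i. if i = 0 then 0 else x$i)"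

lemma rr_prj: "rr x = norm (prj x)"
proof -
  have "(norm (prj x))^2 = (rr x)^2" using norm_sq5[of "prj x"] unfolding rr_sq prj_def by simp
  then show ?thesis using rr_nonneg[of x] by (simp add: power2_eq_iff_nonneg)
qed

lemma prj_diff: "prj y - prj x = prj (y - x)" unfolding prj_def by (simp add: vec_eq_iff)

lemma norm_prj: "norm (prj x) \<le> norm x"
proof -
  have "(norm (prj x))^2 \<le> (norm x)^2" unfolding norm_sq5[of x] rr_prj[symmetric] using norm_sq5[of "prj x"]
    by (simp add: prj_def rr_prj)
  then show ?thesis by (simp add: power2_le_iff_abs_le)
qed

lemma rr_lip: "\<bar>rr y - rr x\<bar> \<le> norm (y - x)"
  unfolding rr_prj using norm_triangle_ineq3[of "prj y" "prj x"] norm_prj[of "y - x"] prj_diff by simp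

lemma comp0_lip: "\<bar>y$0 - x$0\<bar> \<le> norm (y - x)"
  using component_le_norm_cart[of "y - x" 0] by simp

lemma cont_rr: "continuous_on S rr"
  unfolding rr_def by (intro continuous_intros)

definition NL :: "(real^5) set" where "NL = {x. \<bar>x$0\<bar> < rr x}"
definition IL :: "(real^5) set" where "IL = {x. rr x < \<bar>x$0\<bar>}"

lemma open_NL: "open NL"
  unfolding NL_def by (intro open_Collect_less continuous_intros cont_rr)

lemma open_IL: "open IL"
  unfolding IL_def by (intro open_Collect_less continuous_intros cont_rr)

lemma NL_iff: "x \<in> NL \<longleftrightarrow> x \<notin> Lcone" unfolding NL_def Lcone_def by auto
lemma IL_sub: "x \<in> IL \<Longrightarrow> x \<in> Lcone" unfolding IL_def Lcone_def by auto

lemma rr_pos_NL: "x \<notin> Lcone \<Longrightarrow> rr x > 0"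
  unfolding Lcone_def by auto

lemma comp_le_rr_NL: "x \<notin> Lcone \<Longrightarrow> \<bar>x$i\<bar> \<le> rr x"
  using comp_le_rr[of i x] unfolding Lcone_def by (cases "i = 0") auto

lemma r_o_NL: "x \<notin> Lcone \<Longrightarrow> r_o x = ((rr x)^2 - (x$0)^2) / rr x"
  unfolding r_o_def by simp

lemma r_o_bounds: "x \<notin> Lcone \<Longrightarrow> 0 \<le> r_o x \<and> r_o x \<le> rr x"
proof -
  assume x: "x \<notin> Lcone"
  then have R: "rr x > 0" "\<bar>x$0\<bar> < rr x" unfolding Lcone_def by auto
  then have "(x$0)^2 \<le> (rr x)^2" by (simp add: power2_le_iff_abs_le)
  then show ?thesis using R unfolding r_o_NL[OF x]
    by (simp add: divide_le_eq power2_eq_square)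
qed

lemma r_o_near: assumes x: "x \<in> Lcone" and y: "y \<notin> Lcone" shows "r_o y \<le> 4 * norm (y - x)"
proof -
  have R: "rr y > 0" "\<bar>y$0\<bar> < rr y" using y unfolding Lcone_def by auto
  have Rx: "rr x \<le> \<bar>x$0\<bar>" using x unfolding Lcone_def by auto
  have "r_o y = (rr y - \<bar>y$0\<bar>) * ((rr y + \<bar>y$0\<bar>) / rr y)"
    unfolding r_o_NL[OF y] by (simp add: power2_eq_square algebra_simps abs_mult_self_eq flip: abs_mult)
  also have "\<dots> \<le> (rr y - \<bar>y$0\<bar>) * 2"
    using R by (intro mult_left_mono) (auto simp: divide_le_eq)
  also have "rr y - \<bar>y$0\<bar> \<le> 2 * norm (y - x)"
    using rr_lip[of y x] comp0_lip[of y x] Rx by linarith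
  finally show ?thesis using R by linarith
qed


definition mon :: "(5 \<Rightarrow> nat) \<Rightarrow> real^5 \<Rightarrow> real" where
  "mon \<alpha> x = (\<Prod>i\<in>UNIV. x$i ^ \<alpha> i)"

lemma mon_split: "mon \<alpha> x = x$j ^ \<alpha> j * (\<Prod>i\<in>UNIV-{j}. x$i ^ \<alpha> i)"
  unfolding mon_def by (simp add: prod.remove)

lemma prod_upd_other: "(\<Prod>i\<in>UNIV-{j}. x$i ^ (\<alpha>(j := k)) i) = (\<Prod>i\<in>UNIV-{j}. x$i ^ \<alpha> i)"
  by (rule prod.cong) auto

lemma mon_upd: "mon (\<alpha>(j := k)) x = x$j ^ k * (\<Prod>i\<in>UNIV-{j}. x$i ^ \<alpha> i)"
  using mon_split[of "\<alpha>(j := k)" x j] prod_upd_other[where j=j and x=x and \<alpha>=\<alpha> and k=k] by simp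

lemma mon_add: "mon (\<alpha>(j := \<alpha> j + k)) x = x$j ^ k * mon \<alpha> x"
  unfolding mon_upd mon_split[of \<alpha> x j] by (simp add: power_add)

lemma mon_inc: "mon (\<alpha>(j := \<alpha> j + 1)) x = x$j * mon \<alpha> x"
  using mon_add[of \<alpha> j 1 x] by simp

lemma hasp_mon: "hasp (mon \<alpha>) (\<lambda>j. of_nat (\<alpha> j) * mon (\<alpha>(j := \<alpha> j - 1)) x) x"
proof -
  have d: "\<And>i. ((\<lambda>y. y$i ^ \<alpha> i) has_derivative (\<lambda>h. of_nat (\<alpha> i) * h$i * x$i ^ (\<alpha> i - 1))) (at x)"
    using has_derivative_power[OF bounded_linear_imp_has_derivative[OF bounded_linear_vec_nth]] by blast
  have "((\<lambda>y. \<Prod>i\<in>UNIV. y$i ^ \<alpha> i) has_derivative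
     (\<lambda>h. \<Sum>i\<in>UNIV. of_nat (\<alpha> i) * h$i * x$i ^ (\<alpha> i - 1) * (\<Prod>j\<in>UNIV - {i}. x$j ^ \<alpha> j))) (at x)"
    by (rule has_derivative_prod) (rule d)
  then show ?thesis unfolding hasp_def mon_def[symmetric]
    apply (rule has_derivative_eq_rhs)
    apply (rule ext)
    apply (rule sum.cong[OF refl])
    apply (simp only: mon_upd mult_ac)
    done
qed

lemma hasp_rr: assumes x: "x \<notin> Lcone" shows "hasp rr (\<lambda>j. if j = 0 then 0 else x$j / rr x) x"
proof -
  define Q where "Q y = (y$1)^2 + (y$2)^2 + (y$3)^2 + (y$4)^2" for y :: "real^5"
  have rrQ: "rr = (\<lambda>y. sqrt (Q y))" unfolding rr_def Q_def by auto
  have hQ: "hasp Q (\<lambda>j. of_nat 2 * x$1^(2-1) * (if j = 1 then 1 else 0) + of_nat 2 * x$2^(2-1) * (if j = 2 then 1 else 0)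
     + of_nat 2 * x$3^(2-1) * (if j = 3 then 1 else 0) + of_nat 2 * x$4^(2-1) * (if j = 4 then 1 else 0)) x"
    unfolding Q_def by (intro hasp_add hasp_power hasp_coord)
  have Qp: "Q x > 0" using rr_pos_NL[OF x] unfolding rrQ by simp
  have "hasp rr (\<lambda>j. (of_nat 2 * x$1^(2-1) * (if j = 1 then 1 else 0) + of_nat 2 * x$2^(2-1) * (if j = 2 then 1 else 0)
     + of_nat 2 * x$3^(2-1) * (if j = 3 then 1 else 0) + of_nat 2 * x$4^(2-1) * (if j = 4 then 1 else 0)) / (2 * sqrt (Q x))) x"
    unfolding rrQ by (rule hasp_sqrt[OF hQ Qp])
  then show ?thesis
  proof (rule hasp_cong)
    fix j :: 5
    have "sqrt (Q x) = rr x" unfolding rrQ ..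
    then show "(of_nat 2 * x$1^(2-1) * (if j = 1 then 1 else 0) + of_nat 2 * x$2^(2-1) * (if j = 2 then 1 else 0)
     + of_nat 2 * x$3^(2-1) * (if j = 3 then 1 else 0) + of_nat 2 * x$4^(2-1) * (if j = 4 then 1 else 0)) / (2 * sqrt (Q x))
      = (if j = 0 then 0 else x$j / rr x)"
      using exhaust_5[of j] by (elim disjE) simp_all
  qed
qed

definition Of :: "real^5 \<Rightarrow> real" where "Of y = ((rr y)^2 - (y$0)^2) * inverse (rr y)"

definition dO :: "real^5 \<Rightarrow> 5 \<Rightarrow> real" where
  "dO x j = (if j = 0 then - 2 * x$0 / rr x else x$j / rr x + (x$0)^2 * x$j / (rr x)^3)"

lemma hasp_O: assumes x: "x \<notin> Lcone" shows "hasp Of (dO x) x"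
proof -
  have R: "rr x > 0" using rr_pos_NL[OF x] .
  have "hasp Of (\<lambda>j. ((rr x)^2 - (x$0)^2) * (- ((if j = 0 then 0 else x$j / rr x) / (rr x)^2))
      + (of_nat 2 * rr x ^ (2 - 1) * (if j = 0 then 0 else x$j / rr x) - of_nat 2 * (x$0) ^ (2-1) * (if j = 0 then 1 else 0)) * inverse (rr x)) x"
    unfolding Of_def
    by (intro hasp_mult hasp_diff hasp_power hasp_coord hasp_inverse hasp_rr x) (use R in simp)
  then show ?thesis
  proof (rule hasp_cong)
    fix j :: 5
    show "((rr x)^2 - (x$0)^2) * (- ((if j = 0 then 0 else x$j / rr x) / (rr x)^2))
      + (of_nat 2 * rr x ^ (2 - 1) * (if j = 0 then 0 else x$j / rr x) - of_nat 2 * (x$0) ^ (2-1) * (if j = 0 then 1 else 0)) * inverse (rr x)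
      = dO x j"
      unfolding dO_def using R by (cases "j = 0") (simp_all add: field_simps power2_eq_square power3_eq_cube)
  qed
qed


type_synonym trm = "real \<times> nat \<times> (5 \<Rightarrow> nat) \<times> nat"

fun tv :: "trm \<Rightarrow> real^5 \<Rightarrow> real" where
  "tv (c, a, \<alpha>, b) x = (if x \<in> Lcone then 0 else c * r_o x ^ a * mon \<alpha> x * inverse (rr x ^ b))"

definition ev :: "trm list \<Rightarrow> real^5 \<Rightarrow> real" where
  "ev P x = (\<Sum>t\<leftarrow>P. tv t x)"

fun dtrm :: "5 \<Rightarrow> trm \<Rightarrow> trm list" where
  "dtrm j (c, a, \<alpha>, b) = (if j = 0 then
     [(-2 * c * of_nat a, a - 1, \<alpha>(0 := \<alpha> 0 + 1), b + 1), (c * of_nat (\<alpha> 0), a, \<alpha>(0 := \<alpha> 0 - 1), b)]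
   else
     [(c * of_nat a, a - 1, \<alpha>(j := \<alpha> j + 1), b + 1),
      (c * of_nat a, a - 1, (\<alpha>(j := \<alpha> j + 1))(0 := \<alpha> 0 + 2), b + 3),
      (c * of_nat (\<alpha> j), a, \<alpha>(j := \<alpha> j - 1), b),
      (- c * of_nat b, a, \<alpha>(j := \<alpha> j + 1), b + 2)])"

lemma mon_inc': "mon (\<alpha>(j := Suc (\<alpha> j))) x = x$j * mon \<alpha> x"
  using mon_inc by simp

lemma identity_j:
  fixes R Ov M Mdn X0 Xj c :: real
  assumes R: "R > 0"
  shows "c * Ov ^ a * M * (- (of_nat b * R ^ (b - 1) * (Xj / R) / (R ^ b)\<^sup>2)) +
       (c * Ov ^ a * (of_nat aj * Mdn) + (c * (of_nat a * Ov ^ (a - 1) * (Xj / R + X0\<^sup>2 * Xj / R ^ 3)) + 0 * Ov ^ a) * M) * inverse (R ^ b)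
     = c * of_nat a * Ov ^ (a - 1) * (Xj * M) * inverse (R ^ (b + 1))
       + (c * of_nat a * Ov ^ (a - 1) * (X0\<^sup>2 * (Xj * M)) * inverse (R ^ (b + 3))
       + (c * of_nat aj * Ov ^ a * Mdn * inverse (R ^ b)
       + (- c * of_nat b * Ov ^ a * (Xj * M) * inverse (R ^ (b + 2)))))"
proof (cases b)
  case 0
  then show ?thesis using R by (simp add: field_simps power2_eq_square power3_eq_cube)
next
  case (Suc b')
  have e: "R ^ (b' + 4) = R * (R * (R * (R * R ^ b')))" by (simp add: power_add numeral_eq_Suc)
  show ?thesis using R Suc by (simp add: field_simps power2_eq_square power3_eq_cube e)
qed

lemma identity_0:
  fixes R Ov M Mdn X0 c :: real
  assumes R: "R > 0"
  shows "c * Ov ^ a * M * (- (of_nat b * R ^ (b - 1) * 0 / (R ^ b)\<^sup>2)) +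
       (c * Ov ^ a * (of_nat a0 * Mdn) + (c * (of_nat a * Ov ^ (a - 1) * (- 2 * X0 / R)) + 0 * Ov ^ a) * M) * inverse (R ^ b)
     = -2 * c * of_nat a * Ov ^ (a - 1) * (X0 * M) * inverse (R ^ (b + 1))
       + (c * of_nat a0 * Ov ^ a * Mdn * inverse (R ^ b))"
  using R by (simp add: field_simps)

lemma hasp_tv: assumes x: "x \<notin> Lcone" shows "hasp (tv t) (\<lambda>j. ev (dtrm j t) x) x"
proof -
  obtain c a \<alpha> b where t: "t = (c, a, \<alpha>, b)" by (cases t) auto
  have R: "rr x > 0" using rr_pos_NL[OF x] .
  define T where "T y = c * Of y ^ a * mon \<alpha> y * inverse (rr y ^ b)" for y
  have "hasp T (\<lambda>j. (c * Of x ^ a * mon \<alpha> x) * (- (of_nat b * rr x ^ (b - 1) * (if j = 0 then 0 else x$j / rr x) / (rr x ^ b)^2))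
     + ((c * Of x ^ a) * (of_nat (\<alpha> j) * mon (\<alpha>(j := \<alpha> j - 1)) x) + (c * (of_nat a * Of x ^ (a - 1) * dO x j) + 0 * Of x ^ a) * mon \<alpha> x)
       * inverse (rr x ^ b)) x"
    unfolding T_def
    by (intro hasp_mult hasp_const hasp_power hasp_O hasp_mon hasp_inverse hasp_rr x) (use R in simp)
  then have "hasp T (\<lambda>j. ev (dtrm j t) x) x"
  proof (rule hasp_cong)
    fix j :: 5
    have Ox: "Of x = r_o x" unfolding Of_def r_o_NL[OF x] by (simp add: divide_inverse)
    show "(c * Of x ^ a * mon \<alpha> x) * (- (of_nat b * rr x ^ (b - 1) * (if j = 0 then 0 else x$j / rr x) / (rr x ^ b)^2))
     + ((c * Of x ^ a) * (of_nat (\<alpha> j) * mon (\<alpha>(j := \<alpha> j - 1)) x) + (c * (of_nat a * Of x ^ (a - 1) * dO x j) + 0 * Of x ^ a) * mon \<alpha> x)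
       * inverse (rr x ^ b) = ev (dtrm j t) x"
    proof (cases "j = 0")
      case True
      then show ?thesis unfolding t ev_def dO_def Ox using x
        using R by (simp add: mon_inc' field_simps del: fun_upd_apply)
    next
      case False
      have m2: "mon ((\<alpha>(j := \<alpha> j + 1))(0 := \<alpha> 0 + 2)) x = (x$0)^2 * (x$j * mon \<alpha> x)"
        using mon_add[of "\<alpha>(j := \<alpha> j + 1)" 0 2 x] False by (simp add: mon_inc')
      have ev_eq: "ev (dtrm j t) x = c * of_nat a * r_o x ^ (a - 1) * (x$j * mon \<alpha> x) * inverse (rr x ^ (b + 1))
       + (c * of_nat a * r_o x ^ (a - 1) * ((x$0)^2 * (x$j * mon \<alpha> x)) * inverse (rr x ^ (b + 3))
       + (c * of_nat (\<alpha> j) * r_o x ^ a * mon (\<alpha>(j := \<alpha> j - 1)) x * inverse (rr x ^ b)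
       + (- c * of_nat b * r_o x ^ a * (x$j * mon \<alpha> x) * inverse (rr x ^ (b + 2)) + 0)))"
        unfolding t ev_def
        by (simp only: dtrm.simps if_not_P[OF False] list.map sum_list.Cons sum_list.Nil tv.simps if_not_P[OF x] mon_inc m2)
      show ?thesis unfolding ev_eq dO_def Ox if_not_P[OF False] add_0_right
        by (rule identity_j[OF R])
    qed
  qed
  then show ?thesis
  proof (rule hasp_open[OF _ open_NL])
    show "x \<in> NL" using x NL_iff by auto
    fix y assume "y \<in> NL"
    then have y: "y \<notin> Lcone" using NL_iff by auto
    show "T y = tv t y" unfolding T_def t using y
      by (simp add: Of_def r_o_NL[OF y] divide_inverse)
  qed
qed


lemma abs_mon_le: assumes y: "y \<notin> Lcone" shows "\<bar>mon \<alpha> y\<bar> \<le> rr y ^ sum \<alpha> UNIV"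
proof -
  have "\<bar>mon \<alpha> y\<bar> = (\<Prod>i\<in>UNIV. \<bar>y$i\<bar> ^ \<alpha> i)" unfolding mon_def by (simp add: abs_prod power_abs)
  also have "\<dots> \<le> (\<Prod>i\<in>UNIV. rr y ^ \<alpha> i)"
    by (intro prod_mono conjI power_mono comp_le_rr_NL[OF y]) auto
  also have "\<dots> = rr y ^ sum \<alpha> UNIV" by (simp add: power_sum)
  finally show ?thesis .
qed

lemma tv_bound:
  assumes x: "x \<in> Lcone" and s: "s \<le> a" "s + b \<le> a + sum \<alpha> UNIV"
  shows "\<bar>tv (c, a, \<alpha>, b) y\<bar> \<le> \<bar>c\<bar> * (4 * norm (y - x)) ^ s * (rr x + norm (y - x)) ^ (a + sum \<alpha> UNIV - b - s)"
proof (cases "y \<in> Lcone")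
  case True
  then show ?thesis by (simp add: rr_nonneg)
next
  case y: False
  define e where "e = a + sum \<alpha> UNIV - b - s"
  have R: "rr y > 0" using rr_pos_NL[OF y] .
  have ro: "0 \<le> r_o y" "r_o y \<le> rr y" using r_o_bounds[OF y] by auto
  have ro4: "r_o y \<le> 4 * norm (y - x)" using r_o_near[OF x y] .
  have "\<bar>tv (c, a, \<alpha>, b) y\<bar> = \<bar>c\<bar> * r_o y ^ s * r_o y ^ (a - s) * \<bar>mon \<alpha> y\<bar> / rr y ^ b"
    using y ro s R by (simp add: abs_mult power_add[symmetric] divide_inverse)
  also have "\<dots> \<le> \<bar>c\<bar> * (4 * norm (y - x)) ^ s * rr y ^ (a - s) * rr y ^ sum \<alpha> UNIV / rr y ^ b"
    using R ro ro4
    by (intro divide_right_mono mult_mono mult_nonneg_nonneg power_mono abs_mon_le[OF y]) auto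
  also have "\<dots> = \<bar>c\<bar> * (4 * norm (y - x)) ^ s * rr y ^ e"
  proof -
    have "rr y ^ (a - s) * rr y ^ sum \<alpha> UNIV = rr y ^ e * rr y ^ b"
      unfolding e_def power_add[symmetric] using s by (simp add: algebra_simps)
    then show ?thesis using R by (simp add: field_simps)
  qed
  also have "\<dots> \<le> \<bar>c\<bar> * (4 * norm (y - x)) ^ s * (rr x + norm (y - x)) ^ e"
    using rr_lip[of y x] R by (intro mult_left_mono power_mono) auto
  finally show ?thesis unfolding e_def .
qed

definition ok :: "nat \<Rightarrow> trm \<Rightarrow> bool" where
  "ok n t = (case t of (c, a, \<alpha>, b) \<Rightarrow> n \<le> a \<and> n + b \<le> a + sum \<alpha> UNIV)"

lemma tv_zero_L: "x \<in> Lcone \<Longrightarrow> tv t x = 0"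
  by (cases t) auto

lemma tv_cont_L: assumes x: "x \<in> Lcone" and ok: "ok 1 t" shows "isCont (tv t) x"
proof -
  obtain c a \<alpha> b where t: "t = (c, a, \<alpha>, b)" by (cases t) auto
  define e where "e = a + sum \<alpha> UNIV - b - 1"
  define g where "g y = \<bar>c\<bar> * (4 * norm (y - x)) ^ 1 * (rr x + norm (y - x)) ^ e" for y
  have "isCont g x" unfolding g_def by (intro continuous_intros)
  then have g0: "(g \<longlongrightarrow> 0) (at x)" unfolding isCont_def g_def by simp
  have "(tv t \<longlongrightarrow> 0) (at x)"
  proof (rule Lim_null_comparison[OF _ g0])
    show "\<forall>\<^sub>F y in at x. norm (tv t y) \<le> g y"
      using tv_bound[OF x, of 1 a b \<alpha> c] ok unfolding t ok_def g_def e_def by (auto intro!: always_eventually)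
  qed
  then show ?thesis unfolding isCont_def tv_zero_L[OF x] .
qed

lemma tv_deriv_L: assumes x: "x \<in> Lcone" and ok: "ok 2 t" shows "hasp (tv t) (\<lambda>j. 0) x"
proof -
  obtain c a \<alpha> b where t: "t = (c, a, \<alpha>, b)" by (cases t) auto
  define e where "e = a + sum \<alpha> UNIV - b - 2"
  define g where "g h = \<bar>c\<bar> * 16 * norm h * (rr x + norm h) ^ e" for h :: "real^5"
  have "isCont g 0" unfolding g_def by (intro continuous_intros)
  then have g0: "(g \<longlongrightarrow> 0) (at 0)" unfolding isCont_def g_def by simp
  have "((\<lambda>h. norm (tv t (x + h) - tv t x - 0) / norm h) \<longlongrightarrow> 0) (at 0)"
  proof (rule Lim_null_comparison[OF _ g0])
    show "\<forall>\<^sub>F h in at 0. norm (norm (tv t (x + h) - tv t x - 0) / norm h) \<le> g h"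
      unfolding eventually_at
    proof (intro exI[of _ 1] conjI ballI impI)
      fix h :: "real^5" assume "h \<in> UNIV" "h \<noteq> 0 \<and> dist h 0 < 1"
      then have h: "norm h > 0" by auto
      have "\<bar>tv t (x + h)\<bar> \<le> \<bar>c\<bar> * (4 * norm h) ^ 2 * (rr x + norm h) ^ e"
        using tv_bound[OF x, of 2 a b \<alpha> c "x + h"] ok unfolding t ok_def e_def by auto
      then show "norm (norm (tv t (x + h) - tv t x - 0) / norm h) \<le> g h"
        unfolding g_def tv_zero_L[OF x] using h by (simp add: divide_le_eq power2_eq_square mult_ac)
    qed simp
  qed
  then have "(tv t has_derivative (\<lambda>h. 0)) (at x)"
    unfolding has_derivative_at by simp
  then show ?thesis unfolding hasp_def by simp
qed


definition dP :: "5 \<Rightarrow> trm list \<Rightarrow> trm list" where "dP j P = concat (map (dtrm j) P)"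

lemma ev_Nil[simp]: "ev [] x = 0" unfolding ev_def by simp
lemma ev_Cons[simp]: "ev (t # P) x = tv t x + ev P x" unfolding ev_def by simp
lemma ev_append[simp]: "ev (P @ Q) x = ev P x + ev Q x" unfolding ev_def by simp

lemma ev_dP_Cons[simp]: "ev (dP j (t # P)) x = ev (dtrm j t) x + ev (dP j P) x"
  unfolding dP_def by simp

lemma ev_zero_L: "x \<in> Lcone \<Longrightarrow> ev P x = 0"
  by (induct P) (auto simp: tv_zero_L)

lemma hasp_ev:
  assumes "\<forall>t\<in>set P. ok 2 t"
  shows "hasp (ev P) (\<lambda>j. ev (dP j P) x) x"
  using assms
proof (induct P)
  case Nil
  then show ?case unfolding dP_def using hasp_const[of 0 x] by (simp add: ev_def[abs_def])
next
  case (Cons t P)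
  have ht: "hasp (tv t) (\<lambda>j. ev (dtrm j t) x) x"
  proof (cases "x \<in> Lcone")
    case True
    then show ?thesis using tv_deriv_L[OF True] Cons.prems ev_zero_L[OF True] by simp
  next
    case False
    then show ?thesis by (rule hasp_tv)
  qed
  have "hasp (\<lambda>y. tv t y + ev P y) (\<lambda>j. ev (dtrm j t) x + ev (dP j P) x) x"
    using hasp_add[OF ht Cons.hyps] Cons.prems by simp
  then show ?case by simp
qed

lemma isCont_ev:
  assumes "\<forall>t\<in>set P. ok 1 t"
  shows "isCont (ev P) x"
  using assms
proof (induct P)
  case Nil
  then show ?case by (simp add: ev_def[abs_def])
next
  case (Cons t P)
  have ht: "isCont (tv t) x"
  proof (cases "x \<in> Lcone")
    case True
    then show ?thesis using tv_cont_L[OF True] Cons.prems by simp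
  next
    case False
    then show ?thesis by (rule hasp_continuous[OF hasp_tv])
  qed
  have "isCont (\<lambda>y. tv t y + ev P y) x"
    using continuous_add[OF ht Cons.hyps] Cons.prems by simp
  then show ?case by simp
qed

lemma sum_upd: "sum (\<alpha>(j := k)) UNIV + \<alpha> j = sum \<alpha> (UNIV::5 set) + k"
proof -
  have "sum (\<alpha>(j := k)) UNIV = k + sum (\<alpha>(j := k)) (UNIV - {j})"
    using sum.remove[of UNIV j "\<alpha>(j := k)"] by simp
  moreover have "sum \<alpha> UNIV = \<alpha> j + sum \<alpha> (UNIV - {j})"
    using sum.remove[of UNIV j \<alpha>] by simp
  moreover have "sum (\<alpha>(j := k)) (UNIV - {j}) = sum \<alpha> (UNIV - {j})"
    by (rule sum.cong) auto
  ultimately show ?thesis by (simp add: ac_simps)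
qed

lemma ok_dtrm: assumes "ok (Suc n) t" "u \<in> set (dtrm j t)" shows "ok n u"
proof -
  obtain c a \<alpha> b where t: "t = (c, a, \<alpha>, b)" by (cases t) auto
  have A: "Suc n \<le> a" "Suc n + b \<le> a + sum \<alpha> UNIV" using assms(1) unfolding t ok_def by auto
  have s1: "sum (\<alpha>(j := \<alpha> j + 1)) UNIV = sum \<alpha> UNIV + 1" using sum_upd[of \<alpha> j "\<alpha> j + 1"] by simp
  have s2: "sum (\<alpha>(j := \<alpha> j - 1)) UNIV + 1 \<ge> sum \<alpha> UNIV" using sum_upd[of \<alpha> j "\<alpha> j - 1"] by simp
  have s3: "j \<noteq> 0 \<Longrightarrow> sum ((\<alpha>(j := \<alpha> j + 1))(0 := \<alpha> 0 + 2)) UNIV = sum \<alpha> UNIV + 3"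
    using sum_upd[of "\<alpha>(j := \<alpha> j + 1)" 0 "\<alpha> 0 + 2"] s1 by simp
  have s4: "sum (\<alpha>(0 := \<alpha> 0 + 1)) UNIV = sum \<alpha> UNIV + 1" using sum_upd[of \<alpha> 0 "\<alpha> 0 + 1"] by simp
  have s5: "sum (\<alpha>(0 := \<alpha> 0 - 1)) UNIV + 1 \<ge> sum \<alpha> UNIV" using sum_upd[of \<alpha> 0 "\<alpha> 0 - 1"] by simp
  show ?thesis
  proof (cases "j = 0")
    case True
    then show ?thesis using assms(2) A s4 s5 unfolding t ok_def by auto
  next
    case False
    then show ?thesis using assms(2) A s1 s2 s3 unfolding t ok_def by auto
  qed
qed

lemma ok_dP: "\<forall>t\<in>set P. ok (Suc n) t \<Longrightarrow> \<forall>u\<in>set (dP j P). ok n u"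
  unfolding dP_def using ok_dtrm by auto

lemma Basis_real5: "i \<in> (Basis :: (real^5) set) \<Longrightarrow> \<exists>j. i = axis j 1"
  unfolding Basis_vec_def by auto

lemma Ck_ev: "\<forall>t\<in>set P. ok (Suc n) t \<Longrightarrow> Ck n UNIV (ev P)"
proof (induct n arbitrary: P)
  case 0
  then show ?case by (auto intro!: continuous_at_imp_continuous_on isCont_ev)
next
  case (Suc n)
  have ok2: "\<forall>t\<in>set P. ok 2 t" using Suc.prems unfolding ok_def by auto
  show ?case
  proof (simp only: Ck.simps, intro conjI ballI)
    fix x :: "real^5" show "ev P differentiable (at x)"
      by (rule hasp_differentiable[OF hasp_ev[OF ok2]])
  next
    fix i :: "real^5" assume "i \<in> Basis"
    then obtain j where i: "i = axis j 1" using Basis_real5 by blast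
    have "(\<lambda>x. frechet_derivative (ev P) (at x) i) = ev (dP j P)"
      unfolding i using hasp_frechet[OF hasp_ev[OF ok2]] by auto
    moreover have "Ck n UNIV (ev (dP j P))"
      by (rule Suc.hyps) (rule ok_dP[OF Suc.prems])
    ultimately show "Ck n UNIV (\<lambda>x. frechet_derivative (ev P) (at x) i)" by simp
  qed
qed

lemma Ck_subset: "Ck n V f \<Longrightarrow> U \<subseteq> V \<Longrightarrow> Ck n U f"
proof (induct n arbitrary: f)
  case 0
  then show ?case by (auto intro: continuous_on_subset)
next
  case (Suc n)
  then show ?case by auto
qed

lemma g_ev: "g_ml m lr l = ev [(1, m, (\<lambda>i. l$i), lr)]"
  unfolding g_ml_def f_l_def ev_def by (auto simp: fun_eq_iff mult_ac mon_def)


definition e0 :: "real^5" where "e0 = axis 0 1"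

fun Dn :: "nat \<Rightarrow> (real^5 \<Rightarrow> real) \<Rightarrow> real^5 \<Rightarrow> real" where
  "Dn 0 f = f"
| "Dn (Suc j) f = (\<lambda>x. frechet_derivative (Dn j f) (at x) e0)"

lemma e0_Basis: "e0 \<in> Basis" unfolding e0_def Basis_vec_def by auto

lemma Ck_Dn: "Ck n U f \<Longrightarrow> j \<le> n \<Longrightarrow> Ck (n - j) U (Dn j f)"
proof (induct j)
  case 0
  then show ?case by simp
next
  case (Suc j)
  then have "Ck (Suc (n - Suc j)) U (Dn j f)" by (simp add: Suc_diff_Suc)
  then show ?case using e0_Basis by simp
qed

lemma Ck_diff: "Ck (Suc k) U f \<Longrightarrow> x \<in> U \<Longrightarrow> f differentiable (at x)"
  by simp

lemma Ck_cont: "Ck k U f \<Longrightarrow> continuous_on U f"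
proof (cases k)
  case 0
  then show "Ck k U f \<Longrightarrow> continuous_on U f" by simp
next
  case (Suc k')
  assume "Ck k U f"
  then have "\<forall>x\<in>U. f differentiable (at x)" using Suc by simp
  then show ?thesis
    by (intro continuous_at_imp_continuous_on ballI differentiable_imp_continuous_within) auto
qed

lemma line_deriv:
  assumes "f differentiable (at (p + t *\<^sub>R e))"
  shows "((\<lambda>s. f (p + s *\<^sub>R e)) has_real_derivative frechet_derivative f (at (p + t *\<^sub>R e)) e) (at t)"
proof -
  let ?D = "frechet_derivative f (at (p + t *\<^sub>R e))"
  have fD: "(f has_derivative ?D) (at (p + t *\<^sub>R e))"
    using assms frechet_derivative_works by blast
  have lin: "linear ?D" using fD has_derivative_linear by blast
  have l: "((\<lambda>s. p + s *\<^sub>R e) has_derivative (\<lambda>s. s *\<^sub>R e)) (at t)"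
    by (intro derivative_eq_intros) auto
  have "((\<lambda>s. f (p + s *\<^sub>R e)) has_derivative (\<lambda>s. ?D (s *\<^sub>R e))) (at t)"
    using has_derivative_compose[OF l fD] .
  moreover have "(\<lambda>s. ?D (s *\<^sub>R e)) = (*) (?D e)"
    using linear_scale[OF lin] by (auto simp: mult.commute)
  ultimately show ?thesis unfolding has_field_derivative_def by simp
qed

lemma Dn_zero_open:
  assumes "open V" "\<And>y. y \<in> V \<Longrightarrow> f y = 0" "y \<in> V"
  shows "Dn j f y = 0"
  using assms(3)
proof (induct j arbitrary: y)
  case 0
  then show ?case using assms(2) by simp
next
  case (Suc j)
  have "(Dn j f has_derivative (\<lambda>h. 0)) (at y)"
    by (rule has_derivative_transform_within_open[OF has_derivative_const[of 0] assms(1) Suc.prems])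
       (use Suc.hyps in simp)
  then have "frechet_derivative (Dn j f) (at y) = (\<lambda>h. 0)"
    using frechet_derivative_at by metis
  then show ?case by simp
qed

lemma zero_right:
  fixes h :: "real \<Rightarrow> real"
  assumes "isCont h s" "\<And>t. t > s \<Longrightarrow> h t = 0"
  shows "h s = 0"
proof -
  have 1: "(h \<longlongrightarrow> h s) (at_right s)"
  proof -
    have "at_right s \<le> at s" using at_le[of "{s<..}" UNIV s] by simp
    then show ?thesis using assms(1) unfolding isCont_def by (rule tendsto_mono)
  qed
  have "\<forall>\<^sub>F t in at_right s. h t = 0"
  proof -
    have "\<forall>\<^sub>F t in at_right s. t \<in> {s<..<s+1}" by (rule eventually_at_right_real) simp
    then show ?thesis by (rule eventually_mono) (auto intro: assms(2))
  qed
  then have 2: "(h \<longlongrightarrow> 0) (at_right s)"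
    by (rule tendsto_eventually)
  show ?thesis using tendsto_unique[OF _ 1 2] by simp
qed


definition yv :: "real \<Rightarrow> real \<Rightarrow> real^5" where "yv s t = (\<chi> i. if i = 0 then t else s / 2)"

lemma yv_line: "yv s t = yv s 0 + t *\<^sub>R e0"
  unfolding yv_def e0_def by (simp add: vec_eq_iff axis_def)

lemma yv_0[simp]: "yv s t $ 0 = t" unfolding yv_def by simp
lemma yv_i: "i \<noteq> 0 \<Longrightarrow> yv s t $ i = s / 2" unfolding yv_def by simp

lemma rr_yv: "s \<ge> 0 \<Longrightarrow> rr (yv s t) = s"
proof -
  assume s: "s \<ge> 0"
  have "rr (yv s t) = sqrt (4 * (s/2)^2)" unfolding rr_def yv_def by simp
  also have "4 * (s/2)^2 = s^2" by (simp add: power2_eq_square)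
  also have "sqrt (s^2) = s" using s by simp
  finally show ?thesis .
qed

lemma yv_L: "s \<ge> 0 \<Longrightarrow> yv s t \<in> Lcone \<longleftrightarrow> s \<le> \<bar>t\<bar>"
  unfolding Lcone_def using rr_yv by simp

lemma yv_IL: "s \<ge> 0 \<Longrightarrow> yv s t \<in> IL \<longleftrightarrow> s < \<bar>t\<bar>"
  unfolding IL_def using rr_yv by simp

lemma r_o_yv: "0 \<le> t \<Longrightarrow> t < s \<Longrightarrow> r_o (yv s t) = (s - t) * (s + t) / s"
  using yv_L[of s t] r_o_NL[of "yv s t"] rr_yv[of s t] by (simp add: power2_eq_square algebra_simps)

definition Lp :: "nat^5 \<Rightarrow> nat" where "Lp l = (\<Sum>i\<in>UNIV-{0}. l$i)"

lemma prod_yv: "(\<Prod>i\<in>UNIV. (yv s t $ i) ^ (l$i)) = t ^ (l$0) * (s/2) ^ Lp l"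
proof -
  have "(\<Prod>i\<in>UNIV. (yv s t $ i) ^ (l$i)) = t ^ (l$0) * (\<Prod>i\<in>UNIV-{0}. (yv s t $ i) ^ (l$i))"
    using prod.remove[of UNIV 0 "\<lambda>i. (yv s t $ i) ^ (l$i)"] by simp
  also have "(\<Prod>i\<in>UNIV-{0}. (yv s t $ i) ^ (l$i)) = (\<Prod>i\<in>UNIV-{0}. (s/2) ^ (l$i))"
    by (rule prod.cong) (auto simp: yv_i)
  also have "\<dots> = (s/2) ^ Lp l" unfolding Lp_def by (simp add: power_sum)
  finally show ?thesis .
qed

lemma g_yv_in: "0 < t \<Longrightarrow> t < s \<Longrightarrow>
  g_ml m lr l (yv s t) = ((s - t) * (s + t) / s) ^ m * inverse (s ^ lr) * (t ^ (l$0) * (s/2) ^ Lp l)"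
  using yv_L[of s t] rr_yv[of s t] r_o_yv[of t s] unfolding g_ml_def f_l_def prod_yv by simp

lemma g_zero_L: "x \<in> Lcone \<Longrightarrow> g_ml m lr l x = 0" unfolding g_ml_def by simp

lemma zero_in_L: "0 \<in> Lcone" unfolding Lcone_def rr_def by simp

lemma L_Btilde: "Lcone \<subseteq> Btilde a" unfolding Btilde_def by auto

lemma yv_Btilde: assumes "a > 0" "0 < s" "s < 1 / a" "t > 0" shows "yv s t \<in> Btilde a"
proof (cases "t < s")
  case True
  have "r_o (yv s t) = (s - t) * (s + t) / s" using r_o_yv[of t s] True assms by simp
  moreover have "(s - t) * (s + t) / s \<le> s"
    using assms True by (simp add: divide_le_eq algebra_simps power2_eq_square)
  moreover have "(s - t) * (s + t) / s > 0" using assms True by simp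
  ultimately have "yv s t \<in> B a" unfolding B_def using assms by auto
  then show ?thesis unfolding Btilde_def by auto
next
  case False
  then have "yv s t \<in> Lcone" using yv_L[of s t] assms by simp
  then show ?thesis using L_Btilde by auto
qed

lemma norm_yv: assumes "s \<ge> 0" "t \<ge> 0" shows "norm (yv s t) \<le> 2 * s + t"
proof -
  have "norm (yv s t) \<le> (\<Sum>i\<in>UNIV. \<bar>yv s t $ i\<bar>)" by (rule norm_le_l1_cart)
  also have "\<dots> = t + 4 * (s / 2)" using assms by (simp add: sum_5 yv_i)
  finally show ?thesis by simp
qed

lemma IL_g_zero: "y \<in> IL \<Longrightarrow> Dn j (g_ml m lr l) y = 0"
  by (rule Dn_zero_open[OF open_IL]) (auto intro: g_zero_L IL_sub)


lemma taylor_line: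
  assumes Ck: "Ck n U g" and n: "n \<ge> 1" and U: "\<And>t. t > 0 \<Longrightarrow> yv s t \<in> U" and s: "s > 0"
    and \<tau>: "0 < \<tau>" "\<tau> < s"
    and Z: "\<And>j y. y \<in> IL \<Longrightarrow> Dn j g y = 0"
  shows "\<exists>\<xi>. \<tau> < \<xi> \<and> \<xi> < s \<and> g (yv s \<tau>) = Dn n g (yv s \<xi>) / fact n * (\<tau> - s) ^ n"
proof -
  define h where "h j t = Dn j g (yv s t)" for j t
  have D: "DERIV (h j) t :> h (Suc j) t" if j: "j < n" and t: "t > 0" for j t
  proof -
    have "Ck (n - j) U (Dn j g)" using Ck_Dn[OF Ck] j by simp
    moreover have "n - j = Suc (n - j - 1)" using j by simp
    ultimately have "Ck (Suc (n - j - 1)) U (Dn j g)" by simp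
    then have "Dn j g differentiable (at (yv s 0 + t *\<^sub>R e0))"
      using U[OF t] yv_line[of s t] by (metis Ck_diff)
    from line_deriv[OF this]
    have "((\<lambda>t'. Dn j g (yv s 0 + t' *\<^sub>R e0)) has_real_derivative
        frechet_derivative (Dn j g) (at (yv s 0 + t *\<^sub>R e0)) e0) (at t)" .
    moreover have "(\<lambda>t'. Dn j g (yv s 0 + t' *\<^sub>R e0)) = h j"
      unfolding h_def by (metis yv_line)
    moreover have "frechet_derivative (Dn j g) (at (yv s 0 + t *\<^sub>R e0)) e0 = h (Suc j) t"
      unfolding h_def by (simp flip: yv_line)
    ultimately show ?thesis by simp
  qed
  have H0: "h j s = 0" if j: "j < n" for j
  proof (rule zero_right[where h="h j"])
    show "isCont (h j) s" using D[OF j s] by (rule DERIV_isCont)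
    fix t assume "t > s"
    then have "yv s t \<in> IL" using yv_IL[of s t] s by simp
    then show "h j t = 0" unfolding h_def by (rule Z)
  qed
  have "\<exists>t. (if \<tau> < s then \<tau> < t \<and> t < s else s < t \<and> t < \<tau>) \<and>
    h 0 \<tau> = (\<Sum>m<n. (h m s / fact m) * (\<tau> - s)^m) + (h n t / fact n) * (\<tau> - s)^n"
  proof (rule Taylor)
    show "\<forall>m t. m < n \<and> \<tau> \<le> t \<and> t \<le> s \<longrightarrow> DERIV (h m) t :> h (Suc m) t"
      using D \<tau> by auto
  qed (use n \<tau> in auto)
  then obtain \<xi> where "\<tau> < \<xi>" "\<xi> < s" "h 0 \<tau> = (\<Sum>m<n. (h m s / fact m) * (\<tau> - s)^m) + (h n \<xi> / fact n) * (\<tau> - s)^n"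
    using \<tau> by auto
  moreover have "(\<Sum>m<n. (h m s / fact m) * (\<tau> - s)^m) = 0" using H0 by simp
  ultimately show ?thesis unfolding h_def by auto
qed

lemma hn_cont:
  assumes Ck: "Ck n U g" and U: "\<And>t. t > 0 \<Longrightarrow> yv s t \<in> U" and t0: "t0 > 0"
  shows "isCont (\<lambda>t. Dn n g (yv s t)) t0"
proof -
  have "continuous_on U (Dn n g)" using Ck_Dn[OF Ck, of n] by (simp add: Ck_cont)
  moreover have "continuous_on {0<..} (yv s)"
    by (subst yv_line[abs_def]) (intro continuous_intros)
  moreover have "yv s ` {0<..} \<subseteq> U" using U by auto
  ultimately have "continuous_on {0<..} (\<lambda>t. Dn n g (yv s t))"
    by (rule continuous_on_compose2)
  then show ?thesis using t0 by (simp add: continuous_on_eq_continuous_at)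
qed


lemma negA:
  assumes a: "a > 0" and m: "m \<ge> 1" and Ck: "Ck m (Btilde a) (g_ml m lr l)"
  shows False
proof -
  define G where "G = g_ml m lr l"
  define s where "s = 1 / (2*a)"
  have s: "0 < s" "s < 1/a" using a by (auto simp: s_def field_simps)
  have U: "\<And>t. t > 0 \<Longrightarrow> yv s t \<in> Btilde a" using yv_Btilde[OF a s] .
  have Z: "\<And>j y. y \<in> IL \<Longrightarrow> Dn j G y = 0" unfolding G_def by (rule IL_g_zero)
  define hn where "hn t = Dn m G (yv s t)" for t
  have c: "isCont hn s" unfolding hn_def G_def using hn_cont[OF Ck U s(1)] .
  have hs: "hn s = 0"
  proof (rule zero_right[where h=hn])
    show "isCont hn s" by (rule c)
    fix t assume "t > s"
    then have "yv s t \<in> IL" using yv_IL[of s t] s by simp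
    then show "hn t = 0" unfolding hn_def by (rule Z)
  qed
  define Q where "Q = inverse (s ^ lr) * (s/2) ^ Lp l"
  have Q: "Q > 0" using s unfolding Q_def by simp
  define \<epsilon> where "\<epsilon> = fact m * (s/2)^(l$0) * Q"
  have \<epsilon>: "\<epsilon> > 0" using Q s unfolding \<epsilon>_def by simp
  obtain \<delta> where \<delta>: "\<delta> > 0" "\<And>\<xi>. \<xi> \<noteq> s \<and> norm (\<xi> - s) < \<delta> \<longrightarrow> norm (hn \<xi> - hn s) < \<epsilon>"
    using LIM_D[OF c[unfolded isCont_def] \<epsilon>] by blast
  define \<tau> where "\<tau> = max (s/2) (s - \<delta>/2)"
  have \<tau>: "0 < \<tau>" "\<tau> < s" "s/2 \<le> \<tau>" "s - \<tau> < \<delta>" using s \<delta> unfolding \<tau>_def by auto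
  obtain \<xi> where \<xi>: "\<tau> < \<xi>" "\<xi> < s" "G (yv s \<tau>) = Dn m G (yv s \<xi>) / fact m * (\<tau> - s)^m"
    using taylor_line[OF Ck[folded G_def] m U s(1) \<tau>(1,2) Z] by blast
  have h\<xi>: "\<bar>hn \<xi>\<bar> < \<epsilon>" using \<delta>(2)[of \<xi>] \<xi> \<tau> hs by simp
  define P where "P = (s - \<tau>)^m"
  have P: "P > 0" using \<tau> unfolding P_def by simp
  have e1: "((s - \<tau>) * (s + \<tau>) / s)^m = P * ((s + \<tau>) / s)^m"
    unfolding P_def by (simp add: power_mult_distrib[symmetric])
  have Gval: "G (yv s \<tau>) = P * ((s + \<tau>) / s)^m * \<tau>^(l$0) * Q"
    unfolding G_def g_yv_in[OF \<tau>(1,2)] e1 Q_def by (simp add: mult_ac)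
  have p1: "((s + \<tau>) / s)^m \<ge> 1" using s \<tau> by (intro one_le_power) (simp add: le_divide_eq)
  have p2: "\<tau>^(l$0) \<ge> (s/2)^(l$0)" using s \<tau> by (intro power_mono) auto
  have low: "G (yv s \<tau>) \<ge> P * 1 * (s/2)^(l$0) * Q"
    unfolding Gval using P Q p1 p2 s
    by (intro mult_right_mono mult_mono mult_left_mono) auto
  have "\<bar>G (yv s \<tau>)\<bar> = \<bar>hn \<xi>\<bar> / fact m * P"
    using \<xi>(3) \<tau> unfolding hn_def P_def by (simp add: abs_mult power_abs)
  also have "\<dots> < \<epsilon> / fact m * P" using h\<xi> P by (intro mult_strict_right_mono divide_strict_right_mono) auto
  also have "\<dots> = P * 1 * (s/2)^(l$0) * Q" unfolding \<epsilon>_def by simp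
  finally show False using low by linarith
qed


lemma g_half: assumes s: "s > 0"
  shows "g_ml m lr l (yv s (s/2)) = (3/4)^m * (1/2)^(l$0 + Lp l) * s^(m + (l$0 + Lp l)) / s^lr"
proof -
  have e: "(s - s/2) * (s + s/2) / s = (3/4) * s" using s by (simp add: field_simps)
  have "g_ml m lr l (yv s (s/2)) = ((s - s/2) * (s + s/2) / s) ^ m * inverse (s ^ lr) * ((s/2) ^ (l$0) * (s/2) ^ Lp l)"
    by (rule g_yv_in) (use s in auto)
  then show ?thesis using s unfolding e
    by (simp add: power_mult_distrib power_add field_simps)
qed

lemma rr_e0: "rr (t *\<^sub>R e0) = 0" unfolding rr_def e0_def by (simp add: axis_def)

lemma e0_IL: "t \<noteq> 0 \<Longrightarrow> t *\<^sub>R e0 \<in> IL" unfolding IL_def using rr_e0[of t] by (simp add: e0_def axis_def)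

lemma norm_e0_1[simp]: "norm e0 = 1" unfolding e0_def by simp

lemma norm_e0: "norm (t *\<^sub>R e0) = \<bar>t\<bar>" by simp

lemma negB:
  assumes a: "a > 0" and d: "d \<ge> 1" and eq: "m + (l$0 + Lp l) = lr + d" and Ck: "Ck d (Btilde a) (g_ml m lr l)"
  shows False
proof -
  define G where "G = g_ml m lr l"
  define Ls where "Ls = l$0 + Lp l"
  define U where "U = Btilde a"
  define D where "D = Dn d G"
  have Z: "\<And>j y. y \<in> IL \<Longrightarrow> Dn j G y = 0" unfolding G_def by (rule IL_g_zero)
  have cD: "continuous_on U D" using Ck_Dn[OF Ck, of d] unfolding D_def G_def U_def by (simp add: Ck_cont)
  have U0: "0 \<in> U" unfolding U_def using zero_in_L L_Btilde by auto
  have D0: "D 0 = 0"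
  proof (rule ccontr)
    assume ne: "D 0 \<noteq> 0"
    then obtain \<delta> where \<delta>: "\<delta> > 0" "\<And>y. y \<in> U \<Longrightarrow> dist y 0 < \<delta> \<Longrightarrow> dist (D y) (D 0) < \<bar>D 0\<bar>"
      using cD U0 unfolding continuous_on_iff by (metis zero_less_abs_iff)
    define y where "y = (\<delta>/2) *\<^sub>R e0"
    have yIL: "y \<in> IL" unfolding y_def using \<delta> by (intro e0_IL) simp
    then have "y \<in> U" unfolding U_def using IL_sub L_Btilde by auto
    moreover have "dist y 0 < \<delta>" unfolding y_def using \<delta> by (simp add: norm_e0)
    ultimately have "dist (D y) (D 0) < \<bar>D 0\<bar>" by (rule \<delta>(2))
    moreover have "D y = 0" unfolding D_def using Z[OF yIL] .
    ultimately show False by simp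
  qed
  define K where "K = (fact d * (3/4)^m * (1/2)^Ls * 2^d :: real)"
  have K: "K > (0::real)" unfolding K_def by simp
  obtain \<delta> where \<delta>: "\<delta> > 0" "\<And>y. y \<in> U \<Longrightarrow> dist y 0 < \<delta> \<Longrightarrow> dist (D y) (D 0) < K"
    using cD U0 K unfolding continuous_on_iff by metis
  define s where "s = min (1 / (2*a)) (\<delta>/4)"
  have s: "0 < s" "s < 1/a" "s \<le> \<delta>/4" using a \<delta> by (auto simp: s_def field_simps min_def)
  have Uy: "\<And>t. t > 0 \<Longrightarrow> yv s t \<in> U" unfolding U_def using yv_Btilde[OF a s(1,2)] .
  obtain \<xi> where \<xi>: "s/2 < \<xi>" "\<xi> < s" "G (yv s (s/2)) = D (yv s \<xi>) / fact d * (s/2 - s)^d"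
    using taylor_line[OF Ck[folded G_def U_def] d Uy s(1) _ _ Z, of "s/2"] s unfolding D_def by auto
  have "norm (yv s \<xi>) \<le> 2 * s + \<xi>" using norm_yv[of s \<xi>] s \<xi> by simp
  then have "dist (yv s \<xi>) 0 < \<delta>" using s \<xi> by simp
  then have Dx: "\<bar>D (yv s \<xi>)\<bar> < K" using \<delta>(2)[OF Uy] \<xi> s D0 by (simp add: dist_real_def)
  have "\<bar>G (yv s (s/2))\<bar> = \<bar>D (yv s \<xi>)\<bar> / fact d * (s/2)^d"
    using \<xi>(3) s by (simp add: abs_mult power_abs)
  also have "\<dots> < K / fact d * (s/2)^d" using Dx s by (intro mult_strict_right_mono divide_strict_right_mono) auto
  also have "\<dots> = (3/4)^m * (1/2)^Ls * s^d" unfolding K_def by (simp add: power_divide)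
  finally have lt: "\<bar>G (yv s (s/2))\<bar> < (3/4)^m * (1/2)^Ls * s^d" .
  have "G (yv s (s/2)) = (3/4)^m * (1/2)^Ls * s^(lr + d) / s^lr"
    unfolding G_def g_half[OF s(1)] Ls_def eq ..
  also have "\<dots> = (3/4)^m * (1/2)^Ls * s^d" using s by (simp add: power_add)
  finally show False using lt by simp
qed

lemma negC:
  assumes a: "a > 0" and le: "m + (l$0 + Lp l) \<le> lr" and c: "continuous_on (Btilde a) (g_ml m lr l)"
  shows False
proof -
  define G where "G = g_ml m lr l"
  define Ls where "Ls = l$0 + Lp l"
  define U where "U = Btilde a"
  have U0: "0 \<in> U" unfolding U_def using zero_in_L L_Btilde by auto
  have G0: "G 0 = 0" unfolding G_def using g_zero_L zero_in_L by auto
  define K where "K = ((3/4)^m * (1/2)^Ls :: real)"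
  have K: "K > (0::real)" unfolding K_def by simp
  obtain \<delta> where \<delta>: "\<delta> > 0" "\<And>y. y \<in> U \<Longrightarrow> dist y 0 < \<delta> \<Longrightarrow> dist (G y) (G 0) < K"
    using c[folded G_def U_def] U0 K unfolding continuous_on_iff by metis
  define s where "s = min (1 / (2*a)) (min (\<delta>/4) 1)"
  have s1: "s \<le> 1/(2*a)" "s \<le> \<delta>/4" "s \<le> 1" unfolding s_def by auto
  have s0: "0 < s" unfolding s_def using a \<delta> by auto
  have "1/(2*a) < 1/a" using a by (simp add: field_simps)
  then have s: "0 < s" "s < 1/a" "s \<le> \<delta>/4" "s \<le> 1" using s0 s1 by auto
  have Uy: "yv s (s/2) \<in> U" unfolding U_def using yv_Btilde[OF a s(1,2)] s by simp
  have "norm (yv s (s/2)) \<le> 2 * s + s/2" using norm_yv[of s "s/2"] s by simp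
  then have "dist (yv s (s/2)) 0 < \<delta>" using s by simp
  then have lt: "\<bar>G (yv s (s/2))\<bar> < K" using \<delta>(2)[OF Uy] G0 by (simp add: dist_real_def)
  have "s^lr \<le> s^(m + Ls)" using s le unfolding Ls_def by (intro power_decreasing) auto
  then have ge1: "s^(m + Ls) / s^lr \<ge> 1" using s by simp
  have "G (yv s (s/2)) = K * (s^(m + Ls) / s^lr)"
    unfolding G_def g_half[OF s(1)] K_def Ls_def by simp
  also have "\<dots> \<ge> K * 1" using K ge1 by (intro mult_left_mono) auto
  finally show False using lt by simp
qed


theorem lemma2:
  fixes a :: real and m lr :: nat and l :: "nat^5" and k :: int
  assumes "a > 0" and "m \<ge> 1"
    and "k = min (int m) (int m + s_l lr l)"
  shows "(k \<ge> 1 \<longrightarrow> Ck (nat (k - 1)) (Btilde a) (g_ml m lr l))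
         \<and> \<not> Ck (nat k) (Btilde a) (g_ml m lr l)"
proof -
  note a = assms(1) and m = assms(2) and kdef = assms(3)
  define Ls where "Ls = l$0 + Lp l"
  have sumL: "(\<Sum>i\<in>UNIV. l$i) = Ls"
    unfolding Ls_def Lp_def using sum.remove[of UNIV 0 "\<lambda>i. l$i"] by simp
  have sl: "s_l lr l = int Ls - int lr"
    unfolding s_l_def sumL[symmetric] by (simp add: of_nat_sum)
  have pos: "Ck (n - 1) (Btilde a) (g_ml m lr l)" if n: "n \<ge> 1" "n \<le> m" "n + lr \<le> m + Ls" for n
  proof -
    have "Ck (n - 1) UNIV (ev [(1, m, (\<lambda>i. l$i), lr)])"
      by (rule Ck_ev) (use n sumL in \<open>simp add: ok_def\<close>)
    then show ?thesis unfolding g_ev by (rule Ck_subset) simp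
  qed
  show ?thesis
  proof (cases "lr \<le> Ls")
    case True
    then have k: "k = int m" using kdef sl by simp
    show ?thesis
    proof
      show "k \<ge> 1 \<longrightarrow> Ck (nat (k - 1)) (Btilde a) (g_ml m lr l)"
        using pos[of m] m True k by (simp add: nat_diff_distrib)
      show "\<not> Ck (nat k) (Btilde a) (g_ml m lr l)"
        using negA[OF a m, of lr l] k by auto
    qed
  next
    case False
    then have k: "k = int m + int Ls - int lr" using kdef sl by simp
    show ?thesis
    proof (cases "lr < m + Ls")
      case True
      define d where "d = m + Ls - lr"
      have d: "d \<ge> 1" "d \<le> m" "m + Ls = lr + d" "k = int d" using True False k unfolding d_def by auto
      show ?thesis
      proof
        show "k \<ge> 1 \<longrightarrow> Ck (nat (k - 1)) (Btilde a) (g_ml m lr l)"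
          using pos[of d] d by (simp add: nat_diff_distrib)
        show "\<not> Ck (nat k) (Btilde a) (g_ml m lr l)"
          using negB[OF a d(1), of m l lr] d unfolding Ls_def by auto
      qed
    next
      case False
      then have "k \<le> 0" using k by simp
      then show ?thesis using negC[OF a, of m l lr] False unfolding Ls_def by force
    qed
  qed
qed


end
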